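(* Let $G$ be a connected threshold graph with minimum degree $\delta(G)\ge 3$. Then $px_3(G)\le 3$. Moreover, the bound is tight: for every integer $r\ge 2\cdot 2^3+1=17$, the threshold graph $rK_1\vee K_3$ satisfies $px_3(rK_1\vee K_3)=3$.
   Context: All graphs are finite, simple and undirected. A graph $G$ is a threshold graph if there are a weight function $w:V(G)\to\mathbb{R}$ and a real $t$ such that distinct $u,v$ are adjacent iff $w(u)+w(v)\ge t$. $rK_1$ is the edgeless graph on $r$ vertices and $G\vee H$ is the join (disjoint union plus all edges between $G$ and $H$). An edge-coloring assigns colors to edges, adjacent edges being allowed to share a color. A tree in an edge-colored graph is proper if no two adjacent edges of it receive the same color. An edge-coloring of $G$ is a $3$-proper coloring if for every $3$-element set $S\subseteq V(G)$ there is a proper tree in $G$ containing all vertices of $S$; $px_3(G)$ is the minimum number of colors in a $3$-proper coloring of $G$. *)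

theory Defs
  imports Complex_Main
begin

definition simple_graph :: "'a set \<Rightarrow> 'a set set \<Rightarrow> bool" where
  "simple_graph V E \<longleftrightarrow> finite V \<and> (\<forall>e\<in>E. \<exists>u v. u \<in> V \<and> v \<in> V \<and> u \<noteq> v \<and> e = {u, v})"

definition adj_rel :: "'a set \<Rightarrow> 'a set set \<Rightarrow> ('a \<times> 'a) set" where
  "adj_rel V E = {(u, v). u \<in> V \<and> v \<in> V \<and> {u, v} \<in> E}"

definition graph_connected :: "'a set \<Rightarrow> 'a set set \<Rightarrow> bool" where
  "graph_connected V E \<longleftrightarrow> V \<noteq> {} \<and> (\<forall>u\<in>V. \<forall>v\<in>V. (u, v) \<in> (adj_rel V E)\<^sup>*)"

definition degree :: "'a set \<Rightarrow> 'a set set \<Rightarrow> 'a \<Rightarrow> nat" where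
  "degree V E v = card {u \<in> V. {u, v} \<in> E}"

definition min_degree_ge :: "'a set \<Rightarrow> 'a set set \<Rightarrow> nat \<Rightarrow> bool" where
  "min_degree_ge V E d \<longleftrightarrow> (\<forall>v\<in>V. d \<le> degree V E v)"

definition threshold_graph :: "'a set \<Rightarrow> 'a set set \<Rightarrow> bool" where
  "threshold_graph V E \<longleftrightarrow> simple_graph V E \<and>
     (\<exists>(w :: 'a \<Rightarrow> real) t. \<forall>u\<in>V. \<forall>v\<in>V. u \<noteq> v \<longrightarrow> ({u, v} \<in> E \<longleftrightarrow> w u + w v \<ge> t))"

definition has_cycle :: "'a set \<Rightarrow> 'a set set \<Rightarrow> bool" where
  "has_cycle V E \<longleftrightarrow> (\<exists>vs. length vs \<ge> 3 \<and> distinct vs \<and> set vs \<subseteq> V \<and>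
      (\<forall>i < length vs. {vs ! i, vs ! ((i + 1) mod length vs)} \<in> E))"

definition is_tree_in :: "'a set \<Rightarrow> 'a set set \<Rightarrow> 'a set \<Rightarrow> 'a set set \<Rightarrow> bool" where
  "is_tree_in V E VT ET \<longleftrightarrow> VT \<subseteq> V \<and> ET \<subseteq> E \<and> (\<forall>e\<in>ET. e \<subseteq> VT) \<and>
     graph_connected VT ET \<and> \<not> has_cycle VT ET"

definition proper_edges :: "('a set \<Rightarrow> nat) \<Rightarrow> 'a set set \<Rightarrow> bool" where
  "proper_edges c ET \<longleftrightarrow> (\<forall>e\<in>ET. \<forall>f\<in>ET. e \<noteq> f \<and> e \<inter> f \<noteq> {} \<longrightarrow> c e \<noteq> c f)"

definition three_proper_coloring :: "'a set \<Rightarrow> 'a set set \<Rightarrow> ('a set \<Rightarrow> nat) \<Rightarrow> bool" where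
  "three_proper_coloring V E c \<longleftrightarrow>
     (\<forall>S \<subseteq> V. card S = 3 \<longrightarrow>
        (\<exists>VT ET. is_tree_in V E VT ET \<and> S \<subseteq> VT \<and> proper_edges c ET))"

definition px3 :: "'a set \<Rightarrow> 'a set set \<Rightarrow> nat" where
  "px3 V E = (LEAST k. \<exists>c. c ` E \<subseteq> {..<k} \<and> three_proper_coloring V E c)"

(* rK_1 \<or> K_3 on vertex set {0..<r+3}: vertices < r independent, r, r+1, r+2 a triangle,
   all edges between the two parts. *)
definition rK1_join_K3_V :: "nat \<Rightarrow> nat set" where
  "rK1_join_K3_V r = {0..<r + 3}"

definition rK1_join_K3_E :: "nat \<Rightarrow> nat set set" where
  "rK1_join_K3_E r = {{u, v} | u v. u \<in> {0..<r + 3} \<and> v \<in> {0..<r + 3} \<and> u \<noteq> v \<and> (r \<le> u \<or> r \<le> v)}"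

end

theory Submission
  imports Defs
begin

lemma no_cycle_rank:
  fixes f :: "'a \<Rightarrow> nat"
  assumes H: "\<And>v u1 u2. {v,u1} \<in> ET \<Longrightarrow> {v,u2} \<in> ET \<Longrightarrow> f v \<le> f u1 \<Longrightarrow> f v \<le> f u2
      \<Longrightarrow> u1 \<noteq> v \<Longrightarrow> u2 \<noteq> v \<Longrightarrow> u1 = u2"
  shows "\<not> has_cycle VT ET"
proof
  assume "has_cycle VT ET"
  then obtain vs where L: "length vs \<ge> 3" and D: "distinct vs"
    and Ed: "\<And>i. i < length vs \<Longrightarrow> {vs ! i, vs ! ((i + 1) mod length vs)} \<in> ET"
    unfolding has_cycle_def by blast
  define n where "n = length vs"
  have ne: "f ` set vs \<noteq> {}" using L by auto
  have "Min (f ` set vs) \<in> f ` set vs" using ne by (intro Min_in) auto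
  then obtain v where v: "v \<in> set vs" "f v = Min (f ` set vs)" by auto
  then obtain i where i: "i < n" "vs ! i = v" by (auto simp: in_set_conv_nth n_def)
  have minv: "\<And>j. j < n \<Longrightarrow> f v \<le> f (vs ! j)"
    using v by (auto simp: n_def)
  define p where "p = (i + n - 1) mod n"
  define q where "q = (i + 1) mod n"
  have n3: "n \<ge> 3" using L n_def by simp
  have pn: "p < n" "q < n" using n3 by (auto simp: p_def q_def)
  have pi: "(p + 1) mod n = i"
  proof (cases "i = 0")
    case True then show ?thesis using n3 by (simp add: p_def)
  next
    case False
    then obtain j where j: "i = Suc j" by (cases i) auto
    then have "p = j" using i by (simp add: p_def)
    then show ?thesis using j i by simp
  qed
  have neq: "p \<noteq> q \<and> p \<noteq> i \<and> q \<noteq> i"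
  proof (cases "i = 0")
    case True
    then have "p = n - 1" "q = 1" using n3 by (auto simp: p_def q_def)
    then show ?thesis using True n3 by simp
  next
    case False
    then obtain j where j: "i = Suc j" by (cases i) auto
    then have pp: "p = i - 1" using i by (simp add: p_def)
    show ?thesis
    proof (cases "i = n - 1")
      case True
      then have "q = 0" using n3 by (simp add: q_def)
      then show ?thesis using pp True n3 False by simp
    next
      case F2: False
      then have "q = i + 1" using i by (simp add: q_def)
      then show ?thesis using pp False by linarith
    qed
  qed
  have e1: "{vs ! p, v} \<in> ET" using Ed[of p] pn pi i by (simp add: n_def)
  have e2: "{vs ! i, vs ! q} \<in> ET" using Ed[of i] i by (simp add: n_def q_def)
  have d1: "vs ! p \<noteq> v" "vs ! q \<noteq> v" "vs ! p \<noteq> vs ! q"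
    using D neq pn i by (auto simp: nth_eq_iff_index_eq n_def)
  have e1': "{v, vs ! p} \<in> ET" using e1 by (simp add: insert_commute)
  have e2': "{v, vs ! q} \<in> ET" using e2 i by simp
  have "vs ! p = vs ! q"
    by (rule H[OF e1' e2' minv[OF pn(1)] minv[OF pn(2)] d1(1) d1(2)])
  then show False using d1 by simp
qed

lemma sym_adj: "sym (adj_rel V E)"
  by (auto simp: sym_def adj_rel_def insert_commute)

lemma upper_col:
  fixes V :: "'a set" and E :: "'a set set"
  assumes abc: "a \<in> V" "b \<in> V" "c \<in> V" "a \<noteq> b" "a \<noteq> c" "b \<noteq> c"
    and univ: "\<And>v k. v \<in> V \<Longrightarrow> k \<in> {a,b,c} \<Longrightarrow> v \<noteq> k \<Longrightarrow> {v,k} \<in> E"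
  shows "\<exists>col. col ` E \<subseteq> {..<3} \<and> three_proper_coloring V E col"
proof -
  define col where "col e = (if e = {b,c} then 0 else if e = {a,c} then 1 else if e = {a,b} then 2
      else if a \<in> e then 0 else if b \<in> e then 1 else if c \<in> e then 2 else (0::nat))" for e
  have rng: "col ` E \<subseteq> {..<3}" by (auto simp: col_def)
  have "three_proper_coloring V E col"
    unfolding three_proper_coloring_def
  proof (intro allI impI)
    fix S assume SV: "S \<subseteq> V" and cS: "card S = 3"
    have fS: "finite S" using cS by (metis card.infinite zero_neq_numeral)
    define I where "I = S - {a,b,c}"
    have fI: "finite I" using fS by (simp add: I_def)
    have "card I \<le> card S" using fS by (simp add: I_def card_mono)
    also have "\<dots> = card {a,b,c}" using cS abc by simp
    finally have cI: "card I \<le> card {a,b,c}" .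
    have fabc: "finite {a,b,c}" by simp
    from card_le_inj[OF fI fabc cI] obtain g where g: "g ` I \<subseteq> {a,b,c}" "inj_on g I"
      by blast
    have sI: "\<And>s. s \<in> I \<Longrightarrow> s \<in> V \<and> s \<noteq> a \<and> s \<noteq> b \<and> s \<noteq> c \<and> (g s = a \<or> g s = b \<or> g s = c)"
      using g SV by (auto simp: I_def)
    define VT where "VT = {a,b,c} \<union> S"
    define ET where "ET = {{a,c},{b,c}} \<union> (\<lambda>s. {s, g s}) ` I"
    have ETiff: "\<And>u v. {u,v} \<in> ET \<longleftrightarrow> ({u,v} = {a,c} \<or> {u,v} = {b,c} \<or>
          (\<exists>s\<in>I. (u = s \<and> v = g s) \<or> (v = s \<and> u = g s)))"
      unfolding ET_def by (simp add: image_iff doubleton_eq_iff) blast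
    define f where "f v = (if v = c then 2 else if v = a \<or> v = b then 1 else (0::nat))" for v
    have par: "u1 = u2" if "{v,u1} \<in> ET" "{v,u2} \<in> ET" "f v \<le> f u1" "f v \<le> f u2"
        "u1 \<noteq> v" "u2 \<noteq> v" for v u1 u2
    proof -
      have A: "u = (if v = a \<or> v = b then c else g v)" if "{v,u} \<in> ET" "f v \<le> f u" "u \<noteq> v" for u
      proof -
        have h1: "{v,u} = {a,c} \<Longrightarrow> ?thesis" using that(2,3) abc by (auto simp: doubleton_eq_iff f_def)
        have h2: "{v,u} = {b,c} \<Longrightarrow> ?thesis" using that(2,3) abc by (auto simp: doubleton_eq_iff f_def)
        have h3: "?thesis" if s: "s \<in> I" "v = s \<and> u = g s \<or> u = s \<and> v = g s" for s
          using sI[OF s(1)] s(2) \<open>f v \<le> f u\<close> abc by (auto simp: f_def)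
        show ?thesis using that(1)[unfolded ETiff] h1 h2 h3 by blast
      qed
      show ?thesis using A[OF that(1,3,5)] A[OF that(2,4,6)] by simp
    qed
    have acyc: "\<not> has_cycle VT ET" by (rule no_cycle_rank[of ET f]) (rule par)
    define R where "R = adj_rel VT ET"
    have ETV: "\<forall>e\<in>ET. e \<subseteq> VT" using sI by (auto simp: ET_def VT_def I_def)
    have cR: "(c,u) \<in> R\<^sup>*" if "u \<in> VT" for u
    proof -
      have ca: "(c,a) \<in> R" "(c,b) \<in> R"
        by (auto simp: R_def adj_rel_def VT_def ET_def insert_commute)
      have "(c, g u) \<in> R\<^sup>*" if "u \<in> I" using sI[OF that] ca by auto
      moreover have "(g u, u) \<in> R" if "u \<in> I"
        using that sI[OF that] by (auto simp: R_def adj_rel_def VT_def ET_def I_def)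
      ultimately show ?thesis using \<open>u \<in> VT\<close> ca
        by (cases "u \<in> I") (auto simp: VT_def I_def)
    qed
    have conn: "graph_connected VT ET"
      unfolding graph_connected_def
    proof (intro conjI ballI)
      show "VT \<noteq> {}" by (simp add: VT_def)
      fix u v assume "u \<in> VT" "v \<in> VT"
      have "(u,c) \<in> R\<^sup>*" using cR[OF \<open>u \<in> VT\<close>] sym_adj unfolding R_def
        by (meson sym_rtrancl symD)
      then show "(u, v) \<in> (adj_rel VT ET)\<^sup>*" using cR[OF \<open>v \<in> VT\<close>] unfolding R_def by simp
    qed
    have ETE: "ET \<subseteq> E"
      using univ abc sI by (auto simp: ET_def)
    have tree: "is_tree_in V E VT ET"
      unfolding is_tree_in_def using ETE ETV conn acyc SV abc by (auto simp: VT_def)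
    have colI: "col {s, g s} = (if g s = a then 0 else if g s = b then 1 else 2)" if "s \<in> I" for s
      using sI[OF that] abc unfolding col_def by (auto simp: doubleton_eq_iff)
    have col2: "col {a,c} = 1" "col {b,c} = 0" using abc by (auto simp: col_def doubleton_eq_iff)
    have propr: "proper_edges col ET"
      unfolding proper_edges_def
    proof (intro ballI impI)
      fix e e' assume e: "e \<in> ET" "e' \<in> ET" and ne: "e \<noteq> e' \<and> e \<inter> e' \<noteq> {}"
      show "col e \<noteq> col e'"
        using e ne col2 colI sI abc g(2) unfolding ET_def
        by (auto simp: inj_on_def split: if_splits)
    qed
    show "\<exists>VT ET. is_tree_in V E VT ET \<and> S \<subseteq> VT \<and> proper_edges col ET"
      using tree propr by (auto simp: VT_def)
  qed
  then show ?thesis using rng by blast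
qed

lemma px3_le3:
  assumes "\<exists>col. col ` E \<subseteq> {..<3} \<and> three_proper_coloring V E col"
  shows "px3 V E \<le> 3"
  unfolding px3_def using assms by (rule Least_le)

lemma part1:
  fixes V :: "'a set" and E :: "'a set set"
  assumes sg: "simple_graph V E" and th: "threshold_graph V E" and ne: "V \<noteq> {}"
    and md: "min_degree_ge V E 3"
  shows "px3 V E \<le> 3"
proof -
  obtain w :: "'a \<Rightarrow> real" and t where wt:
    "\<And>u v. u \<in> V \<Longrightarrow> v \<in> V \<Longrightarrow> u \<noteq> v \<Longrightarrow> ({u, v} \<in> E \<longleftrightarrow> w u + w v \<ge> t)"
    using th unfolding threshold_graph_def by blast
  have fV: "finite V" using sg by (simp add: simple_graph_def)
  have "Min (w ` V) \<in> w ` V" using fV ne by (intro Min_in) auto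
  then obtain v0 where v0: "v0 \<in> V" "w v0 = Min (w ` V)" by auto
  have v0min: "\<And>v. v \<in> V \<Longrightarrow> w v0 \<le> w v" using v0 fV by simp
  define N where "N = {u \<in> V. {u, v0} \<in> E}"
  have "3 \<le> card N" using md v0(1) by (simp add: min_degree_ge_def degree_def N_def)
  then obtain T where T: "T \<subseteq> N" "card T = 3" by (meson obtain_subset_with_card_n)
  then obtain a b c where abc0: "T = {a,b,c}" "a \<noteq> b" "b \<noteq> c" "a \<noteq> c"
    by (auto simp: card_3_iff)
  have nv0: "u \<noteq> v0" if "u \<in> N" for u
  proof
    assume "u = v0"
    then have "{v0} \<in> E" using that by (simp add: N_def)
    then show False using sg unfolding simple_graph_def
      by (metis doubleton_eq_iff insert_absorb2)
  qed
  have univ: "{v,k} \<in> E" if "v \<in> V" "k \<in> N" "v \<noteq> k" for v k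
  proof -
    have kV: "k \<in> V" and kE: "{k, v0} \<in> E" using that(2) by (auto simp: N_def)
    have "w k + w v0 \<ge> t" using wt[OF kV v0(1) nv0[OF that(2)]] kE by simp
    then have "w v + w k \<ge> t" using v0min[OF that(1)] by simp
    then show ?thesis using wt[OF that(1) kV that(3)] by simp
  qed
  have inN: "a \<in> N" "b \<in> N" "c \<in> N" using T abc0 by auto
  have inV: "a \<in> V" "b \<in> V" "c \<in> V" using inN by (auto simp: N_def)
  show ?thesis
    apply (rule px3_le3)
    apply (rule upper_col[OF inV abc0(2) abc0(4) abc0(3)])
    using univ inN by auto
qed

lemma rkE: "{u,v} \<in> rK1_join_K3_E r \<longleftrightarrow> u \<noteq> v \<and> u < r+3 \<and> v < r+3 \<and> (r \<le> u \<or> r \<le> v)"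
  unfolding rK1_join_K3_E_def by (auto simp: doubleton_eq_iff)

lemma reach_closed:
  assumes "(x,w) \<in> (adj_rel VT ET)\<^sup>*" "x \<in> D" "\<And>u v. u \<in> D \<Longrightarrow> {u,v} \<in> ET \<Longrightarrow> v \<in> D"
  shows "w \<in> D"
  using assms(1) by (induction rule: rtrancl_induct) (auto simp: adj_rel_def assms(2,3))

lemma lower_tree:
  fixes r x y z :: nat and cl :: "nat set \<Rightarrow> nat"
  assumes ETs: "ET \<subseteq> rK1_join_K3_E r"
    and conn: "graph_connected VT ET"
    and pr: "proper_edges cl ET"
    and cl2: "\<forall>e\<in>ET. cl e < 2"
    and xyz: "x \<in> VT" "y \<in> VT" "z \<in> VT" "x < r" "y < r" "z < r" "x \<noteq> y" "x \<noteq> z" "y \<noteq> z"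
    and pat: "\<And>k. r \<le> k \<Longrightarrow> k < r+3 \<Longrightarrow> cl {x,k} = cl {y,k} \<and> cl {x,k} = cl {z,k}"
  shows False
proof -
  define N where "N v = {u. {v,u} \<in> ET}" for v
  have Nsym: "u \<in> N v \<longleftrightarrow> v \<in> N u" for u v by (auto simp: N_def insert_commute)
  have Nbasic: "u \<noteq> v \<and> u < r+3 \<and> v < r+3 \<and> (r \<le> u \<or> r \<le> v)" if "u \<in> N v" for u v
    using that ETs rkE[of v u r] by (auto simp: N_def)
  have prD: "cl e \<noteq> cl f" if "e \<in> ET" "f \<in> ET" "e \<noteq> f" "e \<inter> f \<noteq> {}" for e f
    using pr that unfolding proper_edges_def by blast
  have deg2: False if u: "u1 \<in> N v" "u2 \<in> N v" "u3 \<in> N v" "u1 \<noteq> u2" "u1 \<noteq> u3" "u2 \<noteq> u3"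
    for v u1 u2 u3
  proof -
    have E: "{v,u1} \<in> ET" "{v,u2} \<in> ET" "{v,u3} \<in> ET" using u by (auto simp: N_def)
    have c1: "cl {v,u1} \<noteq> cl {v,u2}" by (rule prD[OF E(1,2)]) (use u in \<open>auto simp: doubleton_eq_iff\<close>)
    have c2: "cl {v,u1} \<noteq> cl {v,u3}" by (rule prD[OF E(1,3)]) (use u in \<open>auto simp: doubleton_eq_iff\<close>)
    have c3: "cl {v,u2} \<noteq> cl {v,u3}" by (rule prD[OF E(2,3)]) (use u in \<open>auto simp: doubleton_eq_iff\<close>)
    have "cl {v,u1} < 2" "cl {v,u2} < 2" "cl {v,u3} < 2" using E cl2 by auto
    then show False using c1 c2 c3 by linarith
  qed
  have share2: False if "p < r" "q < r" "p \<noteq> q" "k \<in> N p" "k \<in> N q" "cl {p,k} = cl {q,k}" for p q k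
  proof -
    have E: "{p,k} \<in> ET" "{q,k} \<in> ET" using that by (auto simp: N_def)
    have "cl {p,k} \<noteq> cl {q,k}"
      by (rule prD[OF E]) (use that Nbasic[OF that(4)] in \<open>auto simp: doubleton_eq_iff\<close>)
    then show False using that(6) by simp
  qed
  have kr: "r \<le> k \<and> k < r + 3" if "k \<in> N p" "p < r" for k p using Nbasic[OF that(1)] that(2) by auto
  have shxy: False if "k \<in> N x" "k \<in> N y" for k
    using share2[OF xyz(4,5,7) that] pat[of k] kr[OF that(1) xyz(4)] by auto
  have shxz: False if "k \<in> N x" "k \<in> N z" for k
    using share2[OF xyz(4,6,8) that] pat[of k] kr[OF that(1) xyz(4)] by auto
  have shyz: False if "k \<in> N y" "k \<in> N z" for k
    using share2[OF xyz(5,6,9) that] pat[of k] kr[OF that(1) xyz(5)] by auto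
  define R where "R = adj_rel VT ET"
  have reach: "(p,q) \<in> R\<^sup>*" if "p \<in> VT" "q \<in> VT" for p q
    using conn that unfolding graph_connected_def R_def by blast
  have nonempty: "\<exists>u. u \<in> N p" if "p \<in> VT" "q \<in> VT" "p \<noteq> q" for p q
  proof -
    have "(p,q) \<in> R\<^sup>*" using reach that by blast
    then show ?thesis using that(3)
      by (cases rule: converse_rtranclE) (auto simp: R_def adj_rel_def N_def)
  qed
  obtain \<alpha> where al: "\<alpha> \<in> N x" using nonempty[OF xyz(1,2,7)] by blast
  obtain \<beta> where be: "\<beta> \<in> N y" using nonempty[OF xyz(2,1)] xyz(7) by auto
  obtain \<gamma> where ga: "\<gamma> \<in> N z" using nonempty[OF xyz(3,1)] xyz(8) by auto
  have K: "r \<le> \<alpha>" "\<alpha> < r+3" "r \<le> \<beta>" "\<beta> < r+3" "r \<le> \<gamma>" "\<gamma> < r+3"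
    using kr[OF al xyz(4)] kr[OF be xyz(5)] kr[OF ga xyz(6)] by auto
  have dab: "\<alpha> \<noteq> \<beta>" "\<alpha> \<noteq> \<gamma>" "\<beta> \<noteq> \<gamma>" using shxy shxz shyz al be ga by blast+
  have Nx: "v = \<alpha>" if "v \<in> N x" for v
  proof -
    have "v \<noteq> \<beta>" "v \<noteq> \<gamma>" using shxy shxz that be ga by blast+
    then show ?thesis using kr[OF that xyz(4)] K dab by linarith
  qed
  have Ny: "v = \<beta>" if "v \<in> N y" for v
  proof -
    have "v \<noteq> \<alpha>" "v \<noteq> \<gamma>" using shxy shyz that al ga by blast+
    then show ?thesis using kr[OF that xyz(5)] K dab by linarith
  qed
  have Nz: "v = \<gamma>" if "v \<in> N z" for v
  proof -
    have "v \<noteq> \<alpha>" "v \<noteq> \<beta>" using shxz shyz that al be by blast+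
    then show ?thesis using kr[OF that xyz(6)] K dab by linarith
  qed
  have closed: "y \<in> D \<and> z \<in> D" if "x \<in> D" "\<And>u v. u \<in> D \<Longrightarrow> v \<in> N u \<Longrightarrow> v \<in> D" for D
  proof -
    have cl': "\<And>u v. u \<in> D \<Longrightarrow> {u,v} \<in> ET \<Longrightarrow> v \<in> D" using that(2) by (auto simp: N_def)
    have r1: "(x,y) \<in> (adj_rel VT ET)\<^sup>*" "(x,z) \<in> (adj_rel VT ET)\<^sup>*"
      using reach[OF xyz(1,2)] reach[OF xyz(1,3)] by (simp_all add: R_def)
    have "y \<in> D" by (rule reach_closed[OF r1(1) that(1)]) (use cl' in blast)
    moreover have "z \<in> D" by (rule reach_closed[OF r1(2) that(1)]) (use cl' in blast)
    ultimately show ?thesis by blast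
  qed
  have xa: "x \<in> N \<alpha>" using al Nsym by blast
  show False
  proof (cases "\<exists>p. p \<in> N \<alpha> \<and> p \<noteq> x")
    case False
    then have Na: "v = x" if "v \<in> N \<alpha>" for v using that by blast
    have "y \<in> {x,\<alpha>}" using closed[of "{x,\<alpha>}"] Nx Na by blast
    then show False using xyz K by auto
  next
    case True
    then obtain p where p: "p \<in> N \<alpha>" "p \<noteq> x" by blast
    have Na: "v = x \<or> v = p" if "v \<in> N \<alpha>" for v using deg2[OF xa p(1) that] p(2) by blast
    have pa: "\<alpha> \<in> N p" using p Nsym by blast
    show False
    proof (cases "r \<le> p")
      case True
      have "p < r + 3" "p \<noteq> \<alpha>" using Nbasic[OF p(1)] by auto
      then have "p = \<beta> \<or> p = \<gamma>" using True K dab by linarith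
      then show False
      proof
        assume pb: "p = \<beta>"
        have yb: "y \<in> N \<beta>" using be Nsym by blast
        have Nb: "v = y \<or> v = \<alpha>" if "v \<in> N \<beta>" for v
          using deg2[OF yb pa[unfolded pb] that] xyz K by fastforce
        have "z \<in> {x,\<alpha>,\<beta>,y}" using closed[of "{x,\<alpha>,\<beta>,y}"] Nx Ny Na Nb pb by blast
        then show False using xyz K by auto
      next
        assume pg: "p = \<gamma>"
        have zg: "z \<in> N \<gamma>" using ga Nsym by blast
        have Ng: "v = z \<or> v = \<alpha>" if "v \<in> N \<gamma>" for v
          using deg2[OF zg pa[unfolded pg] that] xyz K by fastforce
        have "y \<in> {x,\<alpha>,\<gamma>,z}" using closed[of "{x,\<alpha>,\<gamma>,z}"] Nx Nz Na Ng pg by blast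
        then show False using xyz K by auto
      qed
    next
      case False
      then have pr': "p < r" by simp
      have py: "p \<noteq> y" using pa Ny dab by blast
      have pz: "p \<noteq> z" using pa Nz dab by blast
      show False
      proof (cases "\<exists>q. q \<in> N p \<and> q \<noteq> \<alpha>")
        case False
        then have Np: "v = \<alpha>" if "v \<in> N p" for v using that by blast
        have "y \<in> {x,\<alpha>,p}" using closed[of "{x,\<alpha>,p}"] Nx Na Np by blast
        then show False using xyz K py by auto
      next
        case True
        then obtain q where q: "q \<in> N p" "q \<noteq> \<alpha>" by blast
        have Np: "v = \<alpha> \<or> v = q" if "v \<in> N p" for v using deg2[OF pa q(1) that] q(2) by blast
        have "q \<noteq> \<alpha>" "r \<le> q" "q < r+3" using q kr[OF q(1) pr'] by auto
        then have "q = \<beta> \<or> q = \<gamma>" using K dab by linarith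
        then show False
        proof
          assume qb: "q = \<beta>"
          have yb: "y \<in> N \<beta>" using be Nsym by blast
          have pb: "p \<in> N \<beta>" using q qb Nsym by blast
          have Nb: "v = y \<or> v = p" if "v \<in> N \<beta>" for v
            using deg2[OF yb pb that] py by blast
          have "z \<in> {x,\<alpha>,p,\<beta>,y}" using closed[of "{x,\<alpha>,p,\<beta>,y}"] Nx Ny Na Nb Np qb by blast
          then show False using xyz K pz by auto
        next
          assume qg: "q = \<gamma>"
          have zg: "z \<in> N \<gamma>" using ga Nsym by blast
          have pg: "p \<in> N \<gamma>" using q qg Nsym by blast
          have Ng: "v = z \<or> v = p" if "v \<in> N \<gamma>" for v
            using deg2[OF zg pg that] pz by blast
          have "y \<in> {x,\<alpha>,p,\<gamma>,z}" using closed[of "{x,\<alpha>,p,\<gamma>,z}"] Nx Nz Na Ng Np qg by blast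
          then show False using xyz K py by auto
        qed
      qed
    qed
  qed
qed

lemma card_bool3: "card (UNIV :: (bool \<times> bool \<times> bool) set) = 8"
proof -
  have 4: "card (UNIV::(bool \<times> bool) set) = 4"
    using card_cartesian_product[of "UNIV::bool set" "UNIV::bool set"] by simp
  show ?thesis
    using card_cartesian_product[of "UNIV::bool set" "UNIV::(bool \<times> bool) set"] 4 by simp
qed

lemma pigeon3:
  fixes pat :: "nat \<Rightarrow> bool \<times> bool \<times> bool"
  assumes "17 \<le> r"
  shows "\<exists>P. 3 \<le> card {i \<in> {0..<r}. pat i = P}"
proof (rule ccontr)
  assume H: "\<not> ?thesis"
  define F where "F P = {i \<in> {0..<r}. pat i = P}" for P
  have le: "card (F P) \<le> 2" for P
  proof -
    have "\<not> 3 \<le> card (F P)" using H unfolding F_def by blast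
    then show ?thesis by linarith
  qed
  have U: "{0..<r} = (\<Union>P\<in>UNIV. F P)" by (auto simp: F_def)
  have "card (\<Union>P\<in>UNIV. F P) \<le> (\<Sum>P\<in>UNIV. card (F P))"
    by (rule card_UN_le) simp
  also have "\<dots> \<le> card (UNIV :: (bool \<times> bool \<times> bool) set) * 2"
    using sum_bounded_above[of UNIV "\<lambda>P. card (F P)" 2] le by simp
  finally have "card {0..<r} \<le> 16" using U card_bool3 by simp
  then have "r \<le> 16" by simp
  then show False using assms by simp
qed

lemma lower2:
  assumes r: "17 \<le> r"
  shows "\<not> (\<exists>cl. cl ` rK1_join_K3_E r \<subseteq> {..<2} \<and> three_proper_coloring (rK1_join_K3_V r) (rK1_join_K3_E r) cl)"
proof
  assume "\<exists>cl. cl ` rK1_join_K3_E r \<subseteq> {..<2} \<and> three_proper_coloring (rK1_join_K3_V r) (rK1_join_K3_E r) cl"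
  then obtain cl where cl: "cl ` rK1_join_K3_E r \<subseteq> {..<2}"
    and tp: "three_proper_coloring (rK1_join_K3_V r) (rK1_join_K3_E r) cl" by blast
  define pat where "pat i = (cl {i,r} = 0, cl {i,r+1} = 0, cl {i,r+2} = 0)" for i
  obtain P where P: "3 \<le> card {i \<in> {0..<r}. pat i = P}" using pigeon3[OF r] by blast
  then obtain T where T: "T \<subseteq> {i \<in> {0..<r}. pat i = P}" "card T = 3" by (meson obtain_subset_with_card_n)
  then obtain x y z where xyz0: "T = {x,y,z}" "x \<noteq> y" "y \<noteq> z" "x \<noteq> z" by (auto simp: card_3_iff)
  have xr: "x < r" "y < r" "z < r" "pat x = P" "pat y = P" "pat z = P" using T xyz0 by auto
  have "{x,y,z} \<subseteq> rK1_join_K3_V r" using xr by (auto simp: rK1_join_K3_V_def)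
  moreover have "card {x,y,z} = 3" using xyz0 by simp
  ultimately obtain VT ET where tr: "is_tree_in (rK1_join_K3_V r) (rK1_join_K3_E r) VT ET"
    and sub: "{x,y,z} \<subseteq> VT" and pr: "proper_edges cl ET"
    using tp unfolding three_proper_coloring_def by blast
  have ETs: "ET \<subseteq> rK1_join_K3_E r" and conn: "graph_connected VT ET"
    using tr by (auto simp: is_tree_in_def)
  have cl2: "\<forall>e\<in>ET. cl e < 2" using ETs cl by auto
  have clE: "cl {u,k} < 2" if "u < r" "r \<le> k" "k < r+3" for u k
    using cl rkE[of u k r] that by auto
  have eqp: "cl {u,k} = cl {v,k}" if "pat u = pat v" "u < r" "v < r" "r \<le> k" "k < r+3" for u v k
  proof -
    have "k = r \<or> k = r+1 \<or> k = r+2" using that by linarith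
    then have "(cl {u,k} = 0) = (cl {v,k} = 0)" using that(1) by (auto simp: pat_def)
    then show ?thesis using clE[OF that(2,4,5)] clE[OF that(3,4,5)] by linarith
  qed
  have pat': "cl {x,k} = cl {y,k} \<and> cl {x,k} = cl {z,k}" if "r \<le> k" "k < r+3" for k
    using eqp[of x y k] eqp[of x z k] xr that by auto
  show False
    by (rule lower_tree[OF ETs conn pr cl2 _ _ _ xr(1,2,3) xyz0(2,4,3) pat'])
      (use sub in auto)
qed

theorem corollary3p5:
  shows "(\<forall>(V :: 'a set) E. simple_graph V E \<and> threshold_graph V E \<and> graph_connected V E
            \<and> min_degree_ge V E 3 \<longrightarrow> px3 V E \<le> 3)
       \<and> (\<forall>r :: nat. r \<ge> 17 \<longrightarrow> px3 (rK1_join_K3_V r) (rK1_join_K3_E r) = 3)"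
proof (intro conjI allI impI)
  fix V :: "'a set" and E
  assume "simple_graph V E \<and> threshold_graph V E \<and> graph_connected V E \<and> min_degree_ge V E 3"
  then have a: "simple_graph V E" "threshold_graph V E" "V \<noteq> {}" "min_degree_ge V E 3"
    by (auto simp: graph_connected_def)
  show "px3 V E \<le> 3" by (rule part1[OF a])
next
  fix r :: nat assume r: "17 \<le> r"
  have up: "\<exists>col. col ` rK1_join_K3_E r \<subseteq> {..<3} \<and> three_proper_coloring (rK1_join_K3_V r) (rK1_join_K3_E r) col"
  proof (rule upper_col[of r _ "r+1" "r+2"])
    fix v k assume "v \<in> rK1_join_K3_V r" "k \<in> {r, r + 1, r + 2}" "v \<noteq> k"
    then show "{v, k} \<in> rK1_join_K3_E r" unfolding rkE rK1_join_K3_V_def by auto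
  qed (auto simp: rK1_join_K3_V_def)
  show "px3 (rK1_join_K3_V r) (rK1_join_K3_E r) = 3"
    unfolding px3_def
  proof (rule Least_equality)
    show "\<exists>col. col ` rK1_join_K3_E r \<subseteq> {..<3} \<and> three_proper_coloring (rK1_join_K3_V r) (rK1_join_K3_E r) col"
      by (rule up)
  next
    fix k assume k: "\<exists>col. col ` rK1_join_K3_E r \<subseteq> {..<k} \<and> three_proper_coloring (rK1_join_K3_V r) (rK1_join_K3_E r) col"
    show "3 \<le> k"
    proof (rule ccontr)
      assume "\<not> 3 \<le> k"
      then have "{..<k} \<subseteq> {..<2::nat}" by auto
      then have "\<exists>col. col ` rK1_join_K3_E r \<subseteq> {..<2} \<and> three_proper_coloring (rK1_join_K3_V r) (rK1_join_K3_E r) col"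
        using k by (meson order_trans)
      then show False using lower2[OF r] by simp
    qed
  qed
qed

end
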